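(* Let $X$ be a Banach space, $C\subset X$ a $k$-solid complemented $k$-cone, and $\Phi_t$ a $C^1$ semiflow on $X$ that is strongly focusing monotone with respect to $C$, has compact derivatives $D_x\Phi_t$, and admits a flow extension on each $\omega$-limit set. Let $x\in X$ have precompact positive semiorbit, and let $X=E_z\oplus F_z$, $z\in\omega(x)$, be a $k$-exponential separation of $(\Phi_t,D\Phi_t)$ along $\omega(x)$ associated with $C$. Assume $\lambda_{kz}>0$ for every $z\in\omega(x)$. Then there exists a constant $\delta''>0$ such that $$\limsup_{t\to+\infty}\|\Phi_t(y)-\Phi_t(x)\|\ge\delta''$$ for every $y\in X$ with $y\ne x$ and $y-x\in C$.
   Context: Semiflow, $k$-cone, $k$-solid, complemented, strongly focusing monotone: $\Phi:\mathbb{R}^+\times X\to X$ continuous with $\Phi_0=\mathrm{Id}$, $\Phi_{t+s}=\Phi_t\circ\Phi_s$; $C$ closed, $\mathbb{R}C=C$, maximal dimension of contained subspaces $k$, containing a $k$-dim subspace $W$ with $W\setminus\{0\}\subset\operatorname{Int}C$, and admitting a $k$-codim subspace $H^c$ with $H^c\cap C=\{0\}$. $\Phi_t$ is strongly focusing monotone w.r.t. $C$ if it is $C^1$, strongly monotone ($x-y\in C\Rightarrow\Phi_t(x)-\Phi_t(y)\in C$; $x\neq y$, $x-y\in C$, $t>0\Rightarrow \Phi_t(x)-\Phi_t(y)\in\operatorname{Int}C$), $D_x\Phi_t(C\setminus\{0\})\subset\operatorname{Int}C$ for $t>0$, and for each compact invariant set $\Sigma$ there are $\delta,T,\kappa>0$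 such that for every $z\in\Sigma$, $x,y\in B_\delta(z)$ there is a linear $T_{x,y}$ with $T_{x,y}(y-x)=\Phi_T(y)-\Phi_T(x)$ and $\inf_{v\in T_{x,y}C,\|v\|=1}\inf_{u\in X\setminus C}\|v-u\|>\kappa$. $\omega(x)=\bigcap_{s\ge0}\overline{\bigcup_{t\ge s}\Phi_t(x)}$. A $k$-exponential separation along a compact invariant set $\Sigma$ associated with $C$ consists of a continuous $k$-dimensional bundle $z\mapsto E_z$ and a continuous $k$-codimensional closed bundle $z\mapsto F_z$ ($z\in\Sigma$) with $X=E_z\oplus F_z$, $D_z\Phi_tE_z=E_{\Phi_t(z)}$, $D_z\Phi_tF_z\subset F_{\Phi_t(z)}$ for $t>0$, constants $M>0$, $0<\gamma<1$ with $\|D_z\Phi_tw\|\le M\gamma^t\|D_z\Phi_tv\|$ for all unit $w\in F_z$, unit $v\in E_z$, $t\ge0$, and $E_z\subset\operatorname{Int}C\cup\{0\}$, $F_z\cap C=\{0\}$. The $k$-Lyapunov exponent is $\lambda_{kz}=\limsup_{t\to+\infty}\frac1t\log\inf_{v\in E_z,\|v\|=1}\|D_z\Phi_tv\|$. *)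

theory Defs
  imports "HOL-Analysis.Analysis"
begin

definition kdim_subspace :: "'a::real_normed_vector set \<Rightarrow> nat \<Rightarrow> bool" where
  "kdim_subspace W k \<longleftrightarrow> (\<exists>B. finite B \<and> independent B \<and> card B = k \<and> W = span B)"

definition kcodim_subspace :: "'a::real_normed_vector set \<Rightarrow> nat \<Rightarrow> bool" where
  "kcodim_subspace H k \<longleftrightarrow> subspace H \<and>
     (\<exists>V. kdim_subspace V k \<and> V \<inter> H = {0} \<and> (\<forall>x. \<exists>v\<in>V. \<exists>h\<in>H. x = v + h))"

definition k_cone :: "'a::real_normed_vector set \<Rightarrow> nat \<Rightarrow> bool" where
  "k_cone C k \<longleftrightarrow> closed C \<and> (\<forall>r x. x \<in> C \<longrightarrow> r *\<^sub>R x \<in> C) \<and>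
     (\<exists>W. kdim_subspace W k \<and> W \<subseteq> C) \<and>
     (\<forall>B. finite B \<and> independent B \<and> span B \<subseteq> C \<longrightarrow> card B \<le> k)"

definition k_solid :: "'a::real_normed_vector set \<Rightarrow> nat \<Rightarrow> bool" where
  "k_solid C k \<longleftrightarrow> (\<exists>W. kdim_subspace W k \<and> W - {0} \<subseteq> interior C)"

definition complemented :: "'a::real_normed_vector set \<Rightarrow> nat \<Rightarrow> bool" where
  "complemented C k \<longleftrightarrow> (\<exists>H. kcodim_subspace H k \<and> H \<inter> C = {0})"

definition semiflow :: "(real \<Rightarrow> 'a::real_normed_vector \<Rightarrow> 'a) \<Rightarrow> bool" where
  "semiflow \<Phi> \<longleftrightarrow> continuous_on ({0..} \<times> UNIV) (\<lambda>(t, x). \<Phi> t x) \<and>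
     (\<forall>x. \<Phi> 0 x = x) \<and>
     (\<forall>t s x. 0 \<le> t \<longrightarrow> 0 \<le> s \<longrightarrow> \<Phi> (t + s) x = \<Phi> t (\<Phi> s x))"

definition C1_semiflow :: "(real \<Rightarrow> 'a::real_normed_vector \<Rightarrow> 'a) \<Rightarrow> (real \<Rightarrow> 'a \<Rightarrow> 'a \<Rightarrow>\<^sub>L 'a) \<Rightarrow> bool" where
  "C1_semiflow \<Phi> D \<longleftrightarrow> (\<forall>t\<ge>0. (\<forall>x. (\<Phi> t has_derivative blinfun_apply (D t x)) (at x)) \<and>
       continuous_on UNIV (D t))"

definition invariant_set :: "(real \<Rightarrow> 'a \<Rightarrow> 'a) \<Rightarrow> 'a set \<Rightarrow> bool" where
  "invariant_set \<Phi> S \<longleftrightarrow> (\<forall>t\<ge>0. \<Phi> t ` S = S)"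

definition strongly_monotone :: "(real \<Rightarrow> 'a::real_normed_vector \<Rightarrow> 'a) \<Rightarrow> 'a set \<Rightarrow> bool" where
  "strongly_monotone \<Phi> C \<longleftrightarrow>
     (\<forall>t x y. 0 \<le> t \<longrightarrow> x - y \<in> C \<longrightarrow> \<Phi> t x - \<Phi> t y \<in> C) \<and>
     (\<forall>t x y. 0 < t \<longrightarrow> x \<noteq> y \<longrightarrow> x - y \<in> C \<longrightarrow> \<Phi> t x - \<Phi> t y \<in> interior C)"

text \<open>Strongly focusing monotone; the condition inf_{v} inf_{u} ||v-u|| > kappa is unfolded
  literally (with the convention inf of the empty set = +infinity).\<close>
definition strongly_focusing_monotone ::
  "(real \<Rightarrow> 'a::real_normed_vector \<Rightarrow> 'a) \<Rightarrow> (real \<Rightarrow> 'a \<Rightarrow> 'a \<Rightarrow>\<^sub>L 'a) \<Rightarrow> 'a set \<Rightarrow> bool" where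
  "strongly_focusing_monotone \<Phi> D C \<longleftrightarrow>
     C1_semiflow \<Phi> D \<and> strongly_monotone \<Phi> C \<and>
     (\<forall>t x v. 0 < t \<longrightarrow> v \<in> C - {0} \<longrightarrow> blinfun_apply (D t x) v \<in> interior C) \<and>
     (\<forall>\<Sigma>. compact \<Sigma> \<and> invariant_set \<Phi> \<Sigma> \<longrightarrow>
        (\<exists>\<delta> T \<kappa>. 0 < \<delta> \<and> 0 < T \<and> 0 < \<kappa> \<and>
          (\<forall>z\<in>\<Sigma>. \<forall>x\<in>ball z \<delta>. \<forall>y\<in>ball z \<delta>.
             \<exists>L. linear L \<and> L (y - x) = \<Phi> T y - \<Phi> T x \<and>
               (\<exists>\<kappa>'>\<kappa>. \<forall>v\<in>L ` C. norm v = 1 \<longrightarrow> (\<forall>u. u \<notin> C \<longrightarrow> \<kappa>' \<le> norm (v - u))))))"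

definition compact_operator :: "('a::real_normed_vector \<Rightarrow>\<^sub>L 'b::real_normed_vector) \<Rightarrow> bool" where
  "compact_operator L \<longleftrightarrow> compact (closure (blinfun_apply L ` ball 0 1))"

definition omega_limit :: "(real \<Rightarrow> 'a::topological_space \<Rightarrow> 'a) \<Rightarrow> 'a \<Rightarrow> 'a set" where
  "omega_limit \<Phi> x = (\<Inter>s\<in>{0..}. closure (\<Union>t\<in>{s..}. {\<Phi> t x}))"

definition flow_extension :: "(real \<Rightarrow> 'a::topological_space \<Rightarrow> 'a) \<Rightarrow> 'a set \<Rightarrow> bool" where
  "flow_extension \<Phi> S \<longleftrightarrow> (\<exists>\<Psi>. continuous_on (UNIV \<times> S) (\<lambda>(t, z). \<Psi> t z) \<and>
     (\<forall>t. \<forall>z\<in>S. \<Psi> t z \<in> S) \<and> (\<forall>z\<in>S. \<Psi> 0 z = z) \<and>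
     (\<forall>t s. \<forall>z\<in>S. \<Psi> (t + s) z = \<Psi> t (\<Psi> s z)) \<and>
     (\<forall>t\<ge>0. \<forall>z\<in>S. \<Psi> t z = \<Phi> t z))"

definition continuous_bundle :: "'a::real_normed_vector set \<Rightarrow> ('a \<Rightarrow> 'a set) \<Rightarrow> bool" where
  "continuous_bundle \<Sigma> E \<longleftrightarrow> (\<forall>z\<in>\<Sigma>. \<forall>\<epsilon>>0. \<exists>\<delta>>0. \<forall>z'\<in>\<Sigma>. dist z' z < \<delta> \<longrightarrow>
      (\<forall>u\<in>E z'. norm u = 1 \<longrightarrow> infdist u (E z) < \<epsilon>) \<and>
      (\<forall>u\<in>E z. norm u = 1 \<longrightarrow> infdist u (E z') < \<epsilon>))"

definition k_exp_separation ::
  "(real \<Rightarrow> 'a::real_normed_vector \<Rightarrow> 'a) \<Rightarrow> (real \<Rightarrow> 'a \<Rightarrow> 'a \<Rightarrow>\<^sub>L 'a) \<Rightarrow> 'a set \<Rightarrow> nat \<Rightarrow>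
   'a set \<Rightarrow> ('a \<Rightarrow> 'a set) \<Rightarrow> ('a \<Rightarrow> 'a set) \<Rightarrow> bool" where
  "k_exp_separation \<Phi> D C k \<Sigma> E F \<longleftrightarrow>
     continuous_bundle \<Sigma> E \<and> continuous_bundle \<Sigma> F \<and>
     (\<forall>z\<in>\<Sigma>. kdim_subspace (E z) k \<and> kcodim_subspace (F z) k \<and> closed (F z) \<and>
        E z \<inter> F z = {0} \<and> (\<forall>x. \<exists>e\<in>E z. \<exists>f\<in>F z. x = e + f)) \<and>
     (\<forall>z\<in>\<Sigma>. \<forall>t>0. blinfun_apply (D t z) ` E z = E (\<Phi> t z) \<and>
        blinfun_apply (D t z) ` F z \<subseteq> F (\<Phi> t z)) \<and>
     (\<exists>M \<gamma>. 0 < M \<and> 0 < \<gamma> \<and> \<gamma> < 1 \<and>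
        (\<forall>z\<in>\<Sigma>. \<forall>t\<ge>0. \<forall>w\<in>F z. \<forall>v\<in>E z. norm w = 1 \<longrightarrow> norm v = 1 \<longrightarrow>
           norm (D t z w) \<le> M * \<gamma> powr t * norm (D t z v))) \<and>
     (\<forall>z\<in>\<Sigma>. E z \<subseteq> interior C \<union> {0} \<and> F z \<inter> C = {0})"

definition k_lyapunov :: "(real \<Rightarrow> 'a \<Rightarrow> 'a::real_normed_vector \<Rightarrow>\<^sub>L 'a) \<Rightarrow> ('a \<Rightarrow> 'a set) \<Rightarrow> 'a \<Rightarrow> ereal" where
  "k_lyapunov D E z = Limsup at_top
     (\<lambda>t::real. ereal ((1 / t) * ln (INF v\<in>{v\<in>E z. norm v = 1}. norm (D t z v))))"

end

theory Submission
  imports Defs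
begin

definition deep :: "'a::real_normed_vector set \<Rightarrow> real \<Rightarrow> 'a \<Rightarrow> bool" where
  "deep C \<kappa> u \<longleftrightarrow> (\<forall>u'. norm (u - u') < \<kappa> \<longrightarrow> u' \<in> C)"

lemma deep_dec:
  fixes u e f :: "'a::real_normed_vector"
  assumes "norm u = 1" "deep C \<kappa> u" "u = e + f" "f \<in> F" "F \<inter> C = {0}" "0 < \<kappa>" "\<kappa> \<le> 1"
  shows "\<kappa> \<le> norm e \<and> norm f \<le> 2 / \<kappa> * norm e"
proof -
  have ke: "\<kappa> \<le> norm e"
  proof (rule ccontr)
    assume "\<not> \<kappa> \<le> norm e"
    then have "norm (u - f) < \<kappa>" using assms(3) by simp
    then have "f \<in> C" using assms(2) unfolding deep_def by blast
    then have "f = 0" using assms(4,5) by blast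
    then have "norm e = 1" using assms(1,3) by simp
    then show False using \<open>\<not> \<kappa> \<le> norm e\<close> assms(7) by simp
  qed
  have "norm f \<le> norm u + norm e" using assms(3) norm_triangle_ineq4[of u e]
    by (metis add_diff_cancel_left')
  also have "\<dots> \<le> 2 / \<kappa> * norm e"
  proof -
    have "1 \<le> norm e / \<kappa>" using ke assms(6) by simp
    moreover have "norm e \<le> norm e / \<kappa>" using assms(6,7) ke
      by (simp add: le_divide_eq mult_left_le)
    ultimately show ?thesis using assms(1) by simp
  qed
  finally show ?thesis using ke by simp
qed

lemma lyap_big:
  fixes D :: "real \<Rightarrow> 'a::real_normed_vector \<Rightarrow> 'a \<Rightarrow>\<^sub>L 'a"
  assumes "k_lyapunov D E z > 0" "B > 0" "{v\<in>E z. norm v = 1} \<noteq> {}"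
  shows "\<exists>t\<ge>T0. t > 0 \<and> B < (INF v\<in>{v\<in>E z. norm v = 1}. norm (D t z v))"
proof -
  define m where "m t = (INF v\<in>{v\<in>E z. norm v = 1}. norm (D t z v))" for t
  have m0: "0 \<le> m t" for t unfolding m_def using assms(3) by (intro cINF_greatest) auto
  define g where "g t = ereal ((1 / t) * ln (m t))" for t
  have L: "Limsup at_top g > 0" using assms(1) unfolding k_lyapunov_def g_def m_def by simp
  obtain a :: real where a: "0 < a" "ereal a < Limsup at_top g"
  proof (cases "Limsup at_top g")
    case (real r) then show ?thesis using L that[of "r/2"] by auto
  next
    case PInf then show ?thesis using that[of 1] by auto
  next
    case MInf then show ?thesis using L by auto
  qed
  have "\<not> eventually (\<lambda>t. g t \<le> ereal a) at_top"
    using Limsup_bounded[of g "ereal a" at_top] a(2) by auto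
  then have fr: "\<forall>T. \<exists>t\<ge>T. ereal a < g t"
    unfolding eventually_at_top_linorder by (meson not_le)
  define T1 where "T1 = max (max T0 1) (ln B / a)"
  obtain t where t: "t \<ge> T1" "ereal a < g t" using fr by blast
  have tpos: "t > 0" using t(1) unfolding T1_def by simp
  have "a < (1/t) * ln (m t)" using t(2) unfolding g_def by simp
  then have "a * t < ln (m t)" using tpos by (simp add: field_simps)
  moreover have "ln B \<le> a * t" using t(1) a(1) unfolding T1_def
    by (simp add: divide_le_eq mult.commute)
  ultimately have lt: "ln B < ln (m t)" by simp
  have "m t \<noteq> 0"
  proof
    assume "m t = 0"
    then have "a * t < 0" using \<open>a * t < ln (m t)\<close> by simp
    then show False using mult_pos_pos[OF a(1) tpos] by linarith
  qed
  then have "m t > 0" using m0[of t] by simp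
  then have "B < m t" using lt assms(2) by simp
  then show ?thesis using t(1) tpos unfolding T1_def m_def by auto
qed

lemma growth_point:
  fixes \<Phi> :: "real \<Rightarrow> 'a::banach \<Rightarrow> 'a" and D :: "real \<Rightarrow> 'a \<Rightarrow> 'a \<Rightarrow>\<^sub>L 'a"
  assumes C1: "C1_semiflow \<Phi> D"
    and Esub: "subspace (E z)" and Fsub: "subspace (F z)"
    and dec: "\<forall>x. \<exists>e\<in>E z. \<exists>f\<in>F z. x = e + f"
    and FC: "F z \<inter> C = {0}"
    and M: "0 < M" "0 < \<gamma>" "\<gamma> < 1"
    and Mineq: "\<forall>t\<ge>0. \<forall>w\<in>F z. \<forall>v\<in>E z. norm w = 1 \<longrightarrow> norm v = 1 \<longrightarrow>
           norm (D t z w) \<le> M * \<gamma> powr t * norm (D t z v)"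
    and lyap: "k_lyapunov D E z > 0"
    and \<kappa>: "0 < \<kappa>" "\<kappa> \<le> 1"
  shows "\<exists>T>0. \<exists>\<rho>>0. \<forall>p q. dist p z < \<rho> \<longrightarrow> dist q z < \<rho> \<longrightarrow> q \<noteq> p \<longrightarrow>
           deep C \<kappa> ((1 / norm (q - p)) *\<^sub>R (q - p)) \<longrightarrow> 3 * norm (q - p) \<le> norm (\<Phi> T q - \<Phi> T p)"
proof -
  define m where "m t = (INF v\<in>{v\<in>E z. norm v = 1}. norm (D t z v))" for t
  define T0 where "T0 = max 1 (ln (\<kappa> / (4 * M)) / ln \<gamma>)"
  have lng: "ln \<gamma> < 0" using M by simp
  have gam: "M * \<gamma> powr t * (2 / \<kappa>) \<le> 1/2" if "t \<ge> T0" for t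
  proof -
    have "ln (\<kappa> / (4 * M)) / ln \<gamma> \<le> t" using that unfolding T0_def by simp
    then have "t * ln \<gamma> \<le> ln (\<kappa> / (4 * M))" using lng by (simp add: divide_le_eq)
    then have "exp (t * ln \<gamma>) \<le> \<kappa> / (4 * M)" using M \<kappa>
      by (metis exp_le_cancel_iff exp_ln divide_pos_pos mult_pos_pos zero_less_numeral)
    then have "\<gamma> powr t \<le> \<kappa> / (4 * M)" using M by (simp add: powr_def)
    then have "M * \<gamma> powr t \<le> \<kappa> / 4" using M by (simp add: field_simps)
    then show ?thesis using \<kappa> by (simp add: field_simps)
  qed
  obtain T where T: "T > 0" "T \<ge> T0" "{v\<in>E z. norm v = 1} \<noteq> {} \<Longrightarrow> 8 / \<kappa> < m T"
  proof (cases "{v\<in>E z. norm v = 1} = {}")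
    case True then show ?thesis using that[of T0] unfolding T0_def by auto
  next
    case False
    then obtain t where "t \<ge> T0" "t > 0" "8 / \<kappa> < m t"
      using lyap_big[OF lyap _ False, of "8 / \<kappa>" T0] \<kappa> unfolding m_def by auto
    then show ?thesis using that[of t] by auto
  qed
  have Dlow: "4 * norm w \<le> norm (D T z w)" if w: "w \<noteq> 0" "deep C \<kappa> ((1 / norm w) *\<^sub>R w)" for w
  proof -
    define u where "u = (1 / norm w) *\<^sub>R w"
    have nu: "norm u = 1" using w unfolding u_def by simp
    obtain e f where ef: "e \<in> E z" "f \<in> F z" "u = e + f" using dec by blast
    have ke: "\<kappa> \<le> norm e" and kf: "norm f \<le> 2 / \<kappa> * norm e"
      using deep_dec[OF nu w(2)[folded u_def] ef(3) ef(2) FC \<kappa>] by auto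
    have ene: "e \<noteq> 0" using ke \<kappa> by auto
    define e1 where "e1 = (1 / norm e) *\<^sub>R e"
    have e1: "e1 \<in> E z" "norm e1 = 1" using ene ef(1) Esub unfolding e1_def
      by (auto simp: subspace_scale)
    then have ne: "{v\<in>E z. norm v = 1} \<noteq> {}" by auto
    have mT: "8 / \<kappa> < m T" using T(3)[OF ne] .
    have "m T \<le> norm (D T z e1)" unfolding m_def using e1
      by (intro cINF_lower) (auto intro: bdd_belowI[of _ 0])
    moreover have "D T z e = norm e *\<^sub>R D T z e1" using ene unfolding e1_def
      by (simp add: blinfun.scaleR_right)
    ultimately have De: "m T * norm e \<le> norm (D T z e)" using ene
      by (simp add: mult.commute)
    have Df: "norm (D T z f) \<le> (1/2) * norm (D T z e)"
    proof (cases "f = 0")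
      case True then show ?thesis by simp
    next
      case False
      define f1 where "f1 = (1 / norm f) *\<^sub>R f"
      have f1: "f1 \<in> F z" "norm f1 = 1" using False ef(2) Fsub unfolding f1_def
        by (auto simp: subspace_scale)
      have "norm (D T z f1) \<le> M * \<gamma> powr T * norm (D T z e1)"
        using Mineq T(1) f1 e1 by auto
      moreover have "D T z f = norm f *\<^sub>R D T z f1" using False unfolding f1_def
        by (simp add: blinfun.scaleR_right)
      moreover have "D T z e = norm e *\<^sub>R D T z e1" using ene unfolding e1_def
        by (simp add: blinfun.scaleR_right)
      ultimately have "norm (D T z f) \<le> norm f * (M * \<gamma> powr T * (norm (D T z e) / norm e))"
        using ene by (simp add: mult_left_mono)
      also have "\<dots> = (M * \<gamma> powr T) * (norm f / norm e) * norm (D T z e)" by simp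
      also have "\<dots> \<le> (M * \<gamma> powr T) * (2 / \<kappa>) * norm (D T z e)"
        using kf ene M by (intro mult_right_mono mult_left_mono) (auto simp: divide_le_eq mult.commute)
      also have "\<dots> \<le> (1/2) * norm (D T z e)"
        using gam[OF T(2)] by (intro mult_right_mono) auto
      finally show ?thesis .
    qed
    have "D T z u = D T z e + D T z f" using ef(3) by (simp add: blinfun.add_right)
    then have "norm (D T z e) - norm (D T z f) \<le> norm (D T z u)"
      using norm_diff_ineq[of "D T z e" "D T z f"] by simp
    then have Du: "(1/2) * norm (D T z e) \<le> norm (D T z u)" using Df by simp
    have "4 \<le> (1/2) * (m T * norm e)"
    proof -
      have "0 < 8 / \<kappa>" using \<kappa> by simp
      then have "0 \<le> m T" using mT by linarith
      then have "8 / \<kappa> * \<kappa> \<le> m T * norm e" using mT ke \<kappa>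
        by (intro mult_mono) auto
      then show ?thesis using \<kappa> by simp
    qed
    then have "4 \<le> norm (D T z u)" using De Du by simp
    moreover have "D T z w = norm w *\<^sub>R D T z u" using w(1) unfolding u_def
      by (simp add: blinfun.scaleR_right)
    ultimately show ?thesis by (simp add: mult.commute mult_left_mono)
  qed
  have "isCont (D T) z" using C1 T(1) unfolding C1_semiflow_def
    by (simp add: continuous_on_eq_continuous_at)
  then obtain \<rho> where \<rho>: "\<rho> > 0" "\<And>s. dist s z < \<rho> \<Longrightarrow> dist (D T s) (D T z) < 1"
    unfolding continuous_at_eps_delta by (meson zero_less_one)
  have der: "\<And>s. (\<Phi> T has_derivative blinfun_apply (D T s)) (at s)"
    using C1 T(1) unfolding C1_semiflow_def by auto
  have key: "3 * norm (q - p) \<le> norm (\<Phi> T q - \<Phi> T p)"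
    if pq: "dist p z < \<rho>" "dist q z < \<rho>" "q \<noteq> p"
      and dp: "deep C \<kappa> ((1 / norm (q - p)) *\<^sub>R (q - p))" for p q
  proof -
    have S: "p + t *\<^sub>R (q - p) \<in> ball z \<rho>" if "t \<in> {0..1}" for t
    proof -
      have "p + t *\<^sub>R (q - p) = (1 - t) *\<^sub>R p + t *\<^sub>R q" by (simp add: algebra_simps)
      moreover have "p \<in> ball z \<rho>" "q \<in> ball z \<rho>" using pq by (auto simp: dist_commute)
      ultimately show ?thesis using that convex_ball[of z \<rho>]
        by (auto simp: convex_alt)
    qed
    have B: "onorm (blinfun_apply (D T s) - blinfun_apply (D T z)) \<le> 1" if "s \<in> ball z \<rho>" for s
    proof -
      have "blinfun_apply (D T s) - blinfun_apply (D T z) = blinfun_apply (D T s - D T z)"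
        by (simp add: minus_blinfun.rep_eq fun_eq_iff)
      moreover have "norm (D T s - D T z) < 1" using \<rho>(2)[of s] that
        by (simp add: dist_norm norm_minus_commute)
      ultimately show ?thesis by (simp add: norm_blinfun.rep_eq)
    qed
    have "norm (\<Phi> T q - \<Phi> T p - D T z (q - p)) \<le> norm (q - p) * 1"
      by (rule differentiable_bound_linearization[where S="ball z \<rho>" and f'="\<lambda>s. blinfun_apply (D T s)"])
        (use S B der \<rho>(1) in \<open>auto intro: has_derivative_at_withinI\<close>)
    moreover have "4 * norm (q - p) \<le> norm (D T z (q - p))"
      using Dlow[of "q - p"] pq(3) dp by auto
    ultimately show "3 * norm (q - p) \<le> norm (\<Phi> T q - \<Phi> T p)"
      using norm_triangle_ineq2[of "D T z (q - p)" "\<Phi> T q - \<Phi> T p"]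
      by (simp add: norm_minus_commute)
  qed
  show ?thesis using key T(1) \<rho>(1) by blast
qed

lemma approach:
  fixes \<Phi> :: "real \<Rightarrow> 'a::metric_space \<Rightarrow> 'a"
  assumes K: "compact (closure ((\<lambda>t. \<Phi> t x) ` {0..}))" and e: "e > 0"
  shows "\<exists>t1. \<forall>t\<ge>t1. \<exists>z\<in>omega_limit \<Phi> x. dist (\<Phi> t x) z < e"
proof (rule ccontr)
  assume "\<not> ?thesis"
  then have "\<forall>n::nat. \<exists>t\<ge>real n. \<forall>z\<in>omega_limit \<Phi> x. e \<le> dist (\<Phi> t x) z"
    by (meson not_le)
  then obtain tt where tt: "\<And>n. tt n \<ge> real n" "\<And>n. \<forall>z\<in>omega_limit \<Phi> x. e \<le> dist (\<Phi> (tt n) x) z"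
    by metis
  define K where "K = closure ((\<lambda>t. \<Phi> t x) ` {0..})"
  have inK: "\<Phi> (tt n) x \<in> K" for n
    unfolding K_def using tt(1)[of n] by (intro closure_subset[THEN subsetD]) auto
  obtain l \<sigma> where l0: "l \<in> K" "strict_mono \<sigma>" "((\<lambda>n. \<Phi> (tt n) x) \<circ> \<sigma>) \<longlonglongrightarrow> l"
    using seq_compactE[OF compact_imp_seq_compact[OF K[folded K_def]], of "\<lambda>n. \<Phi> (tt n) x"] inK by blast
  have l: "l \<in> K" "strict_mono \<sigma>" "(\<lambda>n. \<Phi> (tt (\<sigma> n)) x) \<longlonglongrightarrow> l"
    using l0 by (simp_all add: o_def)
  have "l \<in> omega_limit \<Phi> x"
    unfolding omega_limit_def
  proof (rule InterI)
    fix S assume "S \<in> (\<lambda>s. closure (\<Union>t\<in>{s..}. {\<Phi> t x})) ` {0..}"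
    then obtain s :: real where s: "0 \<le> s" and S: "S = closure (\<Union>t\<in>{s..}. {\<Phi> t x})" by auto
    obtain N :: nat where N: "s \<le> real N" using real_arch_simple by blast
    have lim: "(\<lambda>n. \<Phi> (tt (\<sigma> (n + N))) x) \<longlonglongrightarrow> l"
      using LIMSEQ_ignore_initial_segment[OF l(3), of N] .
    have "\<forall>n. \<Phi> (tt (\<sigma> (n + N))) x \<in> (\<Union>t\<in>{s..}. {\<Phi> t x})"
    proof
      fix n
      have "real N \<le> real (\<sigma> (n + N))" using seq_suble[OF l(2), of "n + N"] by simp
      then have "s \<le> tt (\<sigma> (n + N))" using N tt(1)[of "\<sigma> (n + N)"] by linarith
      then show "\<Phi> (tt (\<sigma> (n + N))) x \<in> (\<Union>t\<in>{s..}. {\<Phi> t x})" by auto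
    qed
    then show "l \<in> S" unfolding S
      by (intro closure_sequential[THEN iffD2] exI[of _ "\<lambda>n. \<Phi> (tt (\<sigma> (n + N))) x"] conjI lim)
  qed
  moreover have "eventually (\<lambda>n. dist (\<Phi> (tt (\<sigma> n)) x) l < e) sequentially"
    using l(3) e by (simp add: tendsto_iff)
  then obtain n where "dist (\<Phi> (tt (\<sigma> n)) x) l < e" by (meson eventually_sequentially order_refl)
  ultimately show False using tt(2)[of "\<sigma> n"] by force
qed

lemma cover:
  fixes \<Phi> :: "real \<Rightarrow> 'a::real_normed_vector \<Rightarrow> 'a"
  assumes cpt: "compact \<Omega>"
    and G: "\<forall>z\<in>\<Omega>. \<exists>T>0. \<exists>\<rho>>0. \<forall>p q. dist p z < \<rho> \<longrightarrow> dist q z < \<rho> \<longrightarrow> q \<noteq> p \<longrightarrow>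
           deep C \<kappa> ((1 / norm (q - p)) *\<^sub>R (q - p)) \<longrightarrow> 3 * norm (q - p) \<le> norm (\<Phi> T q - \<Phi> T p)"
  shows "\<exists>r>0. \<exists>Tm>0. \<forall>p q. (\<exists>z\<in>\<Omega>. dist p z < r) \<longrightarrow> norm (q - p) < r \<longrightarrow> q \<noteq> p \<longrightarrow>
           deep C \<kappa> ((1 / norm (q - p)) *\<^sub>R (q - p)) \<longrightarrow>
           (\<exists>T\<ge>Tm. 2 * norm (q - p) \<le> norm (\<Phi> T q - \<Phi> T p))"
proof -
  from G obtain TT \<rho>\<rho> where TR: "\<And>z. z \<in> \<Omega> \<Longrightarrow> TT z > 0 \<and> \<rho>\<rho> z > 0 \<and> (\<forall>p q. dist p z < \<rho>\<rho> z \<longrightarrow> dist q z < \<rho>\<rho> z \<longrightarrow> q \<noteq> p \<longrightarrow>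
           deep C \<kappa> ((1 / norm (q - p)) *\<^sub>R (q - p)) \<longrightarrow> 3 * norm (q - p) \<le> norm (\<Phi> (TT z) q - \<Phi> (TT z) p))"
    by metis
  have "\<Omega> \<subseteq> (\<Union>z\<in>\<Omega>. ball z (\<rho>\<rho> z / 2))" using TR by force
  then obtain Z where Z: "Z \<subseteq> \<Omega>" "finite Z" "\<Omega> \<subseteq> (\<Union>z\<in>Z. ball z (\<rho>\<rho> z / 2))"
    using compactE_image[OF cpt, of \<Omega> "\<lambda>z. ball z (\<rho>\<rho> z / 2)"] by blast
  show ?thesis
  proof (cases "Z = {}")
    case True
    then have "\<Omega> = {}" using Z by auto
    then show ?thesis by (intro exI[of _ 1]) (auto intro: exI[of _ "1::real"])
  next
    case False
    define r where "r = Min ((\<lambda>z. \<rho>\<rho> z / 4) ` Z)"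
    define Tm where "Tm = Min (TT ` Z)"
    have rpos: "r > 0" unfolding r_def using Z False TR by (subst Min_gr_iff) auto
    have Tpos: "Tm > 0" unfolding Tm_def using Z False TR by (subst Min_gr_iff) auto
    have rle: "r \<le> \<rho>\<rho> z / 4" if "z \<in> Z" for z unfolding r_def
      using Min_le[of "(\<lambda>z. \<rho>\<rho> z / 4) ` Z" "\<rho>\<rho> z / 4"] Z that by simp
    have Tle: "Tm \<le> TT z" if "z \<in> Z" for z unfolding Tm_def
      using Min_le[of "TT ` Z" "TT z"] Z that by simp
    have key: "\<exists>T\<ge>Tm. 2 * norm (q - p) \<le> norm (\<Phi> T q - \<Phi> T p)"
      if pz: "\<exists>z\<in>\<Omega>. dist p z < r" and qp: "norm (q - p) < r" "q \<noteq> p"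
        and dp: "deep C \<kappa> ((1 / norm (q - p)) *\<^sub>R (q - p))" for p q
    proof -
      obtain z' where z': "z' \<in> \<Omega>" "dist p z' < r" using pz by blast
      obtain z where z: "z \<in> Z" "dist z z' < \<rho>\<rho> z / 2" using Z(3) z'(1) by auto
      have zO: "z \<in> \<Omega>" using z Z by auto
      have "dist p z < \<rho>\<rho> z" using z rle[OF z(1)] z'(2) dist_triangle[of p z z'] TR[OF zO]
        by (simp add: dist_commute)
      moreover have "dist q z < \<rho>\<rho> z"
      proof -
        have "dist q p < r" using qp by (simp add: dist_norm)
        then show ?thesis using z rle[OF z(1)] z'(2) dist_triangle[of q z p] dist_triangle[of p z z'] TR[OF zO]
          by (simp add: dist_commute)
      qed
      ultimately have "3 * norm (q - p) \<le> norm (\<Phi> (TT z) q - \<Phi> (TT z) p)"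
        using TR[OF zO] qp(2) dp by blast
      then show "\<exists>T\<ge>Tm. 2 * norm (q - p) \<le> norm (\<Phi> T q - \<Phi> T p)"
        using Tle[OF z(1)] norm_ge_zero[of "q - p"] by (intro exI[of _ "TT z"] conjI; linarith)
    qed
    show ?thesis
      apply (rule exI[of _ r], rule conjI[OF rpos], rule exI[of _ Tm], rule conjI[OF Tpos])
      apply (intro allI impI)
      apply (rule key)
      by assumption+
  qed
qed


lemma chain:
  fixes \<Phi> :: "real \<Rightarrow> 'a::real_normed_vector \<Rightarrow> 'a"
  assumes sg: "\<forall>t s x. 0 \<le> t \<longrightarrow> 0 \<le> s \<longrightarrow> \<Phi> (t + s) x = \<Phi> t (\<Phi> s x)"
    and G: "\<forall>p q. (\<exists>z\<in>\<Omega>. dist p z < r) \<longrightarrow> norm (q - p) < r \<longrightarrow> q \<noteq> p \<longrightarrow>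
           deep C \<kappa> ((1 / norm (q - p)) *\<^sub>R (q - p)) \<longrightarrow>
           (\<exists>T\<ge>Tm. 2 * norm (q - p) \<le> norm (\<Phi> T q - \<Phi> T p))"
    and Tm: "Tm \<ge> 0" and t1: "t1 \<ge> 0"
    and H: "\<forall>t\<ge>t1. (\<exists>z\<in>\<Omega>. dist (\<Phi> t a) z < r) \<and> norm (\<Phi> t b - \<Phi> t a) < r \<and>
              (\<Phi> t b \<noteq> \<Phi> t a \<longrightarrow> deep C \<kappa> ((1 / norm (\<Phi> t b - \<Phi> t a)) *\<^sub>R (\<Phi> t b - \<Phi> t a)))"
  shows "\<forall>t\<ge>t1. \<Phi> t b = \<Phi> t a"
proof (intro allI impI, rule ccontr)
  fix t assume t: "t \<ge> t1" "\<Phi> t b \<noteq> \<Phi> t a"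
  define c where "c = norm (\<Phi> t b - \<Phi> t a)"
  have c: "c > 0" using t(2) unfolding c_def by simp
  have ind: "\<exists>t'\<ge>t1. 2^n * c \<le> norm (\<Phi> t' b - \<Phi> t' a)" for n
  proof (induction n)
    case 0 then show ?case using t(1) unfolding c_def by auto
  next
    case (Suc n)
    then obtain t' where t': "t' \<ge> t1" "2^n * c \<le> norm (\<Phi> t' b - \<Phi> t' a)" by blast
    have "0 < (2::real)^n * c" using c by simp
    then have ne: "\<Phi> t' b \<noteq> \<Phi> t' a" using t'(2) by auto
    have h1: "\<exists>z\<in>\<Omega>. dist (\<Phi> t' a) z < r" and h2: "norm (\<Phi> t' b - \<Phi> t' a) < r"
      and h3: "deep C \<kappa> ((1 / norm (\<Phi> t' b - \<Phi> t' a)) *\<^sub>R (\<Phi> t' b - \<Phi> t' a))"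
      using H[rule_format, OF t'(1)] ne by auto
    obtain T where T: "T \<ge> Tm" "2 * norm (\<Phi> t' b - \<Phi> t' a) \<le> norm (\<Phi> T (\<Phi> t' b) - \<Phi> T (\<Phi> t' a))"
      using G[rule_format, OF h1 h2 ne h3] by blast
    have e1: "\<Phi> T (\<Phi> t' b) = \<Phi> (T + t') b" and e2: "\<Phi> T (\<Phi> t' a) = \<Phi> (T + t') a"
      using sg[rule_format, of T t'] T(1) Tm t'(1) t1 by auto
    have "2^(Suc n) * c \<le> norm (\<Phi> (T + t') b - \<Phi> (T + t') a)"
      using T(2) t'(2) unfolding e1 e2 by simp
    moreover have "T + t' \<ge> t1" using T(1) Tm t'(1) by simp
    ultimately show ?case by blast
  qed
  obtain n where "r / c < 2^n" using real_arch_pow[of 2 "r/c"] by auto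
  then have rn: "r < 2^n * c" using c by (simp add: divide_less_eq)
  obtain t' where t': "t' \<ge> t1" "2^n * c \<le> norm (\<Phi> t' b - \<Phi> t' a)" using ind by blast
  have "norm (\<Phi> t' b - \<Phi> t' a) < r" using H t'(1) by blast
  then show False using rn t'(2) by simp
qed

lemma orbit_cont:
  fixes \<Phi> :: "real \<Rightarrow> 'a::real_normed_vector \<Rightarrow> 'a"
  assumes sf: "semiflow \<Phi>"
  shows "continuous_on {0..} (\<lambda>t. \<Phi> t a)"
proof -
  have c: "continuous_on ({0..} \<times> UNIV) (\<lambda>(t, x). \<Phi> t x)" using sf unfolding semiflow_def by simp
  have "continuous_on {0..} ((\<lambda>(t, x). \<Phi> t x) \<circ> (\<lambda>t. (t, a)))"
    by (rule continuous_on_compose[OF continuous_on_Pair[OF continuous_on_id continuous_on_const] continuous_on_subset[OF c]]) auto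
  then show ?thesis by (simp add: o_def)
qed

lemma no_hit:
  fixes \<Phi> :: "real \<Rightarrow> 'a::real_normed_vector \<Rightarrow> 'a"
  assumes sf: "semiflow \<Phi>"
    and G: "\<forall>p q. (\<exists>z\<in>\<Omega>. dist p z < r) \<longrightarrow> norm (q - p) < r \<longrightarrow> q \<noteq> p \<longrightarrow>
           deep C \<kappa> ((1 / norm (q - p)) *\<^sub>R (q - p)) \<longrightarrow>
           (\<exists>T\<ge>Tm. 2 * norm (q - p) \<le> norm (\<Phi> T q - \<Phi> T p))"
    and Tm: "Tm > 0" and r: "r > 0"
    and eO: "e \<in> \<Omega>" and eq: "\<forall>t\<ge>0. \<Phi> t e = e"
    and deepall: "\<forall>u. deep C \<kappa> u"
    and hit: "\<tau> \<ge> 0" "\<Phi> \<tau> a = e"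
  shows "a = e"
proof (rule ccontr)
  assume ae: "a \<noteq> e"
  have sg: "\<forall>t s x. 0 \<le> t \<longrightarrow> 0 \<le> s \<longrightarrow> \<Phi> (t + s) x = \<Phi> t (\<Phi> s x)" and id0: "\<forall>x. \<Phi> 0 x = x"
    using sf unfolding semiflow_def by auto
  define S where "S = {0..} \<inter> (\<lambda>t. \<Phi> t a) -` {e}"
  have cont: "continuous_on {0..} (\<lambda>t. \<Phi> t a)" using orbit_cont[OF sf] .
  have clS: "closed S" unfolding S_def by (rule continuous_closed_preimage[OF cont]) auto
  have neS: "S \<noteq> {}" using hit unfolding S_def by auto
  have bS: "bdd_below S" unfolding S_def by (rule bdd_belowI[of _ 0]) auto
  define s where "s = Inf S"
  have sS: "s \<in> S" unfolding s_def using closed_contains_Inf[OF neS bS clS] .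
  then have s0: "s \<ge> 0" and ss: "\<Phi> s a = e" unfolding S_def by auto
  have spos: "s > 0"
  proof (rule ccontr)
    assume "\<not> s > 0" then have "s = 0" using s0 by simp
    then show False using ss id0 ae by simp
  qed
  obtain \<eta> where \<eta>: "\<eta> > 0" "\<And>t. t \<in> {0..} \<Longrightarrow> dist t s < \<eta> \<Longrightarrow> dist (\<Phi> t a) (\<Phi> s a) < r"
  proof -
    have "\<exists>\<eta>>0. \<forall>t\<in>{0..}. dist t s < \<eta> \<longrightarrow> dist (\<Phi> t a) (\<Phi> s a) < r"
      using cont s0 r unfolding continuous_on_iff by simp
    then show ?thesis using that by blast
  qed
  define h where "h = min (min (\<eta>/2) s) (Tm/2)"
  have h: "0 < h" "h \<le> s" "h < \<eta>" "h < Tm" unfolding h_def using \<eta>(1) spos Tm by auto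
  define q where "q = \<Phi> (s - h) a"
  have qe: "q \<noteq> e"
  proof
    assume "q = e"
    then have "s - h \<in> S" unfolding S_def q_def using h by auto
    then have "s \<le> s - h" unfolding s_def using cInf_lower bS by blast
    then show False using h by simp
  qed
  have dq: "norm (q - e) < r"
    using \<eta>(2)[of "s - h"] h ss unfolding q_def by (simp add: dist_norm)
  have ez: "\<exists>z\<in>\<Omega>. dist e z < r" using eO r by (intro bexI[of _ e]) auto
  obtain T where T: "T \<ge> Tm" "2 * norm (q - e) \<le> norm (\<Phi> T q - \<Phi> T e)"
    using G[rule_format, OF ez dq qe deepall[rule_format]] by blast
  have "\<Phi> T q = \<Phi> (T + (s - h)) a" using sg[rule_format, of T "s - h" a] T(1) h Tm unfolding q_def by simp
  also have "\<dots> = \<Phi> ((T - h) + s) a" by (simp add: algebra_simps)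
  also have "\<dots> = \<Phi> (T - h) (\<Phi> s a)" using sg[rule_format, of "T - h" s a] T(1) h s0 by simp
  also have "\<dots> = e" using ss eq T(1) h by simp
  finally have "\<Phi> T q = e" .
  moreover have "\<Phi> T e = e" using eq T(1) Tm by simp
  ultimately have "norm (q - e) \<le> 0" using T(2) by simp
  then show False using qe by simp
qed

lemma zero_interior_univ:
  fixes C :: "'a::real_normed_vector set"
  assumes "0 \<in> interior C" and sc: "\<forall>r x. x \<in> C \<longrightarrow> r *\<^sub>R x \<in> C"
  shows "C = UNIV"
proof -
  obtain \<epsilon> where \<epsilon>: "\<epsilon> > 0" "ball 0 \<epsilon> \<subseteq> C" using assms(1) mem_interior by blast
  have "v \<in> C" for v
  proof (cases "v = 0")
    case True then show ?thesis using assms(1) interior_subset by blast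
  next
    case False
    define w where "w = (\<epsilon> / (2 * norm v)) *\<^sub>R v"
    have "norm w = \<epsilon> / 2" using False \<epsilon>(1) unfolding w_def by simp
    then have "w \<in> C" using \<epsilon> by auto
    then have "((2 * norm v) / \<epsilon>) *\<^sub>R w \<in> C" using sc by blast
    moreover have "((2 * norm v) / \<epsilon>) *\<^sub>R w = v" using False \<epsilon>(1) unfolding w_def by simp
    ultimately show ?thesis by simp
  qed
  then show ?thesis by auto
qed

lemma unif_small:
  fixes \<Phi> :: "real \<Rightarrow> 'a::real_normed_vector \<Rightarrow> 'a"
  assumes sf: "semiflow \<Phi>" and K: "compact K" and r: "r > 0"
  shows "\<exists>h0>0. \<forall>h p. 0 \<le> h \<longrightarrow> h \<le> h0 \<longrightarrow> p \<in> K \<longrightarrow> dist (\<Phi> h p) p < r"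
proof -
  have c: "continuous_on ({0..} \<times> UNIV) (\<lambda>(t, x). \<Phi> t x)" and id0: "\<forall>x. \<Phi> 0 x = x"
    using sf unfolding semiflow_def by auto
  have "compact ({0..1::real} \<times> K)" using K by (intro compact_Times) auto
  moreover have "continuous_on ({0..1::real} \<times> K) (\<lambda>(t, x). \<Phi> t x)"
    by (rule continuous_on_subset[OF c]) auto
  ultimately have "uniformly_continuous_on ({0..1::real} \<times> K) (\<lambda>(t, x). \<Phi> t x)"
    by (rule compact_uniformly_continuous[rotated])
  then obtain d where d: "d > 0" "\<And>a b. a \<in> {0..1::real} \<times> K \<Longrightarrow> b \<in> {0..1} \<times> K \<Longrightarrow> dist b a < d \<Longrightarrow>
      dist ((\<lambda>(t, x). \<Phi> t x) b) ((\<lambda>(t, x). \<Phi> t x) a) < r"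
    unfolding uniformly_continuous_on_def using r by metis
  define h0 where "h0 = min (d / 2) 1"
  have "dist (\<Phi> h p) p < r" if "0 \<le> h" "h \<le> h0" "p \<in> K" for h p
  proof -
    have "dist (h, p) (0, p) < d" using that d(1) unfolding h0_def by (simp add: dist_Pair_Pair)
    then have "dist ((\<lambda>(t, x). \<Phi> t x) (h, p)) ((\<lambda>(t, x). \<Phi> t x) (0, p)) < r"
      using that unfolding h0_def by (intro d(2)) auto
    then show ?thesis using id0 by simp
  qed
  moreover have "h0 > 0" unfolding h0_def using d by simp
  ultimately show ?thesis by blast
qed

theorem lemma4p2:
  fixes \<Phi> :: "real \<Rightarrow> 'a::banach \<Rightarrow> 'a"
    and D :: "real \<Rightarrow> 'a \<Rightarrow> 'a \<Rightarrow>\<^sub>L 'a"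
    and C :: "'a set" and k :: nat and x :: 'a
    and E F :: "'a \<Rightarrow> 'a set"
  assumes "k_cone C k" and "k_solid C k" and "complemented C k"
    and "semiflow \<Phi>"
    and "strongly_focusing_monotone \<Phi> D C"
    and "\<forall>t>0. \<forall>y. compact_operator (D t y)"
    and "\<forall>y. flow_extension \<Phi> (omega_limit \<Phi> y)"
    and "compact (closure ((\<lambda>t. \<Phi> t x) ` {0..}))"
    and "k_exp_separation \<Phi> D C k (omega_limit \<Phi> x) E F"
    and "\<forall>z\<in>omega_limit \<Phi> x. k_lyapunov D E z > 0"
  shows "\<exists>\<delta>''>0. \<forall>y. y \<noteq> x \<and> y - x \<in> C \<longrightarrow>
           Limsup at_top (\<lambda>t::real. ereal (norm (\<Phi> t y - \<Phi> t x))) \<ge> ereal \<delta>''"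
proof -
  note sf = assms(4)
  define \<Omega> where "\<Omega> = omega_limit \<Phi> x"
  define K where "K = closure ((\<lambda>t. \<Phi> t x) ` {0..})"
  have cK: "compact K" using assms(8) unfolding K_def .
  have sg: "\<forall>t s x. 0 \<le> t \<longrightarrow> 0 \<le> s \<longrightarrow> \<Phi> (t + s) x = \<Phi> t (\<Phi> s x)" and id0: "\<forall>x. \<Phi> 0 x = x"
    using sf unfolding semiflow_def by auto
  have C1: "C1_semiflow \<Phi> D" and smon: "strongly_monotone \<Phi> C"
    and foc: "\<forall>\<Sigma>. compact \<Sigma> \<and> invariant_set \<Phi> \<Sigma> \<longrightarrow>
        (\<exists>\<delta> T \<kappa>. 0 < \<delta> \<and> 0 < T \<and> 0 < \<kappa> \<and>
          (\<forall>z\<in>\<Sigma>. \<forall>x\<in>ball z \<delta>. \<forall>y\<in>ball z \<delta>.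
             \<exists>L. linear L \<and> L (y - x) = \<Phi> T y - \<Phi> T x \<and>
               (\<exists>\<kappa>'>\<kappa>. \<forall>v\<in>L ` C. norm v = 1 \<longrightarrow> (\<forall>u. u \<notin> C \<longrightarrow> \<kappa>' \<le> norm (v - u)))))"
    using assms(5) unfolding strongly_focusing_monotone_def by auto
  have sc: "\<forall>r x. x \<in> C \<longrightarrow> r *\<^sub>R x \<in> C" using assms(1) unfolding k_cone_def by auto
  have mon1: "\<And>t a b. 0 \<le> t \<Longrightarrow> a - b \<in> C \<Longrightarrow> \<Phi> t a - \<Phi> t b \<in> C"
    and mon2: "\<And>t a b. 0 < t \<Longrightarrow> a \<noteq> b \<Longrightarrow> a - b \<in> C \<Longrightarrow> \<Phi> t a - \<Phi> t b \<in> interior C"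
    using smon unfolding strongly_monotone_def by auto
  have OK: "\<Omega> \<subseteq> K"
  proof -
    have "\<Omega> \<subseteq> closure (\<Union>t\<in>{0..}. {\<Phi> t x})" unfolding \<Omega>_def omega_limit_def by auto
    moreover have "(\<Union>t\<in>{0..}. {\<Phi> t x}) = (\<lambda>t. \<Phi> t x) ` {0..}" by auto
    ultimately show ?thesis unfolding K_def by simp
  qed
  have clO: "closed \<Omega>" unfolding \<Omega>_def omega_limit_def by (intro closed_Inter) auto
  have cO: "compact \<Omega>" using compact_Int_closed[OF cK clO] OK by (simp add: Int_absorb1)
  obtain \<Psi> where \<Psi>: "\<forall>t. \<forall>z\<in>\<Omega>. \<Psi> t z \<in> \<Omega>" "\<forall>z\<in>\<Omega>. \<Psi> 0 z = z"
      "\<forall>t s. \<forall>z\<in>\<Omega>. \<Psi> (t + s) z = \<Psi> t (\<Psi> s z)" "\<forall>t\<ge>0. \<forall>z\<in>\<Omega>. \<Psi> t z = \<Phi> t z"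
    using assms(7) unfolding flow_extension_def \<Omega>_def by blast
  have inv: "invariant_set \<Phi> \<Omega>"
    unfolding invariant_set_def
  proof (intro allI impI equalityI subsetI)
    fix t :: real and w assume t: "t \<ge> 0"
    { assume "w \<in> \<Phi> t ` \<Omega>"
      then obtain z where z: "z \<in> \<Omega>" "w = \<Phi> t z" by auto
      then show "w \<in> \<Omega>" using \<Psi>(1,4) t by metis }
    { assume w: "w \<in> \<Omega>"
      have "w = \<Psi> (t + - t) w" using \<Psi>(2) w by simp
      also have "\<dots> = \<Psi> t (\<Psi> (-t) w)" using \<Psi>(3) w by blast
      also have "\<dots> = \<Phi> t (\<Psi> (-t) w)" using \<Psi>(1,4) w t by blast
      finally show "w \<in> \<Phi> t ` \<Omega>" using \<Psi>(1) w by blast }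
  qed
  obtain \<delta>f Tf \<kappa>f where F: "0 < \<delta>f" "0 < Tf" "0 < \<kappa>f"
     "\<forall>z\<in>\<Omega>. \<forall>a\<in>ball z \<delta>f. \<forall>b\<in>ball z \<delta>f.
             \<exists>L. linear L \<and> L (b - a) = \<Phi> Tf b - \<Phi> Tf a \<and>
               (\<exists>\<kappa>'>\<kappa>f. \<forall>v\<in>L ` C. norm v = 1 \<longrightarrow> (\<forall>u. u \<notin> C \<longrightarrow> \<kappa>' \<le> norm (v - u)))"
    using foc[rule_format, OF conjI[OF cO inv]] by blast
  define \<kappa> where "\<kappa> = min \<kappa>f 1"
  have \<kappa>: "0 < \<kappa>" "\<kappa> \<le> 1" "\<kappa> \<le> \<kappa>f" using F(3) unfolding \<kappa>_def by auto
  note XS = assms(9)[unfolded k_exp_separation_def, folded \<Omega>_def]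
  obtain M \<gamma> where M: "0 < M" "0 < \<gamma>" "\<gamma> < 1"
     "\<forall>z\<in>\<Omega>. \<forall>t\<ge>0. \<forall>w\<in>F z. \<forall>v\<in>E z. norm w = 1 \<longrightarrow> norm v = 1 \<longrightarrow>
           norm (D t z w) \<le> M * \<gamma> powr t * norm (D t z v)"
    using XS[THEN conjunct2, THEN conjunct2, THEN conjunct2, THEN conjunct2, THEN conjunct1] by blast
  have ES: "\<forall>z\<in>\<Omega>. kdim_subspace (E z) k \<and> kcodim_subspace (F z) k \<and> closed (F z) \<and>
        E z \<inter> F z = {0} \<and> (\<forall>x. \<exists>e\<in>E z. \<exists>f\<in>F z. x = e + f)"
    and FC: "\<forall>z\<in>\<Omega>. E z \<subseteq> interior C \<union> {0} \<and> F z \<inter> C = {0}"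
    using XS[THEN conjunct2, THEN conjunct2, THEN conjunct1]
      XS[THEN conjunct2, THEN conjunct2, THEN conjunct2, THEN conjunct2, THEN conjunct2] by auto
  have Gz: "\<forall>z\<in>\<Omega>. \<exists>T>0. \<exists>\<rho>>0. \<forall>p q. dist p z < \<rho> \<longrightarrow> dist q z < \<rho> \<longrightarrow> q \<noteq> p \<longrightarrow>
           deep C \<kappa> ((1 / norm (q - p)) *\<^sub>R (q - p)) \<longrightarrow> 3 * norm (q - p) \<le> norm (\<Phi> T q - \<Phi> T p)"
  proof
    fix z assume z: "z \<in> \<Omega>"
    have Es: "subspace (E z)" using ES z unfolding kdim_subspace_def by (auto simp: subspace_span)
    have Fs: "subspace (F z)" using ES z unfolding kcodim_subspace_def by auto
    show "\<exists>T>0. \<exists>\<rho>>0. \<forall>p q. dist p z < \<rho> \<longrightarrow> dist q z < \<rho> \<longrightarrow> q \<noteq> p \<longrightarrow>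
           deep C \<kappa> ((1 / norm (q - p)) *\<^sub>R (q - p)) \<longrightarrow> 3 * norm (q - p) \<le> norm (\<Phi> T q - \<Phi> T p)"
      by (rule growth_point[where E=E and F=F and z=z and C=C and D=D and \<Phi>=\<Phi> and M=M and \<gamma>=\<gamma> and \<kappa>=\<kappa>, OF C1 Es Fs _ _ M(1-3) _ _ \<kappa>(1,2)])
        (use ES FC M(4) z assms(10) in \<open>auto simp: \<Omega>_def\<close>)
  qed
  obtain r Tm where rT: "r > 0" "Tm > 0" and G: "\<forall>p q. (\<exists>z\<in>\<Omega>. dist p z < r) \<longrightarrow> norm (q - p) < r \<longrightarrow> q \<noteq> p \<longrightarrow>
           deep C \<kappa> ((1 / norm (q - p)) *\<^sub>R (q - p)) \<longrightarrow>
           (\<exists>T\<ge>Tm. 2 * norm (q - p) \<le> norm (\<Phi> T q - \<Phi> T p))"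
    using cover[where \<Phi>=\<Phi>, OF cO Gz] by blast
  have appr: "\<And>e. e > 0 \<Longrightarrow> \<exists>t1. \<forall>t\<ge>t1. \<exists>z\<in>\<Omega>. dist (\<Phi> t x) z < e"
    using approach[where \<Phi>=\<Phi> and x=x, OF assms(8)] unfolding \<Omega>_def by blast
  have nz: "\<Phi> t y \<noteq> \<Phi> t x" if y: "y \<noteq> x" "y - x \<in> C" and t: "t \<ge> 0" for y t
  proof (cases "C = UNIV")
    case False
    show ?thesis
    proof (cases "t = 0")
      case True then show ?thesis using id0 y by simp
    next
      case False
      then have "\<Phi> t y - \<Phi> t x \<in> interior C" using mon2[OF _ y] t by simp
      then show ?thesis using zero_interior_univ[OF _ sc] \<open>C \<noteq> UNIV\<close> by auto
    qed
  next
    case True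
    have deepall: "\<forall>u. deep C \<kappa> u" unfolding deep_def True by simp
    obtain h0 where h0: "h0 > 0" "\<forall>h p. 0 \<le> h \<longrightarrow> h \<le> h0 \<longrightarrow> p \<in> K \<longrightarrow> dist (\<Phi> h p) p < r"
      using unif_small[OF sf cK rT(1)] by blast
    obtain ta where ta: "\<forall>t\<ge>ta. \<exists>z\<in>\<Omega>. dist (\<Phi> t x) z < r" using appr rT(1) by blast
    define t1 where "t1 = max ta 0"
    have inK: "\<Phi> t x \<in> K" if "t \<ge> 0" for t unfolding K_def
      using that by (intro closure_subset[THEN subsetD]) auto
    have step: "\<Phi> (t + h) x = \<Phi> t x" if th: "t \<ge> t1" "0 \<le> h" "h \<le> h0" for t h
    proof -
      have "\<forall>t\<ge>t1. \<Phi> t (\<Phi> h x) = \<Phi> t x"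
      proof (rule chain[OF sg G _ _, of t1 x "\<Phi> h x"])
        show "0 \<le> Tm" using rT by simp
        show "0 \<le> t1" unfolding t1_def by simp
        show "\<forall>t\<ge>t1. (\<exists>z\<in>\<Omega>. dist (\<Phi> t x) z < r) \<and> norm (\<Phi> t (\<Phi> h x) - \<Phi> t x) < r \<and>
          (\<Phi> t (\<Phi> h x) \<noteq> \<Phi> t x \<longrightarrow> deep C \<kappa> ((1 / norm (\<Phi> t (\<Phi> h x) - \<Phi> t x)) *\<^sub>R (\<Phi> t (\<Phi> h x) - \<Phi> t x)))"
        proof (intro allI impI conjI)
          fix t assume t: "t1 \<le> t"
          then have t0: "t \<ge> 0" unfolding t1_def by simp
          show "\<exists>z\<in>\<Omega>. dist (\<Phi> t x) z < r" using ta t unfolding t1_def by simp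
          have "\<Phi> t (\<Phi> h x) = \<Phi> (t + h) x" using sg[rule_format, of t h x] th t0 by simp
          also have "\<dots> = \<Phi> (h + t) x" by (simp add: add.commute)
          also have "\<dots> = \<Phi> h (\<Phi> t x)" using sg[rule_format, of h t x] th t0 by simp
          finally have "\<Phi> t (\<Phi> h x) = \<Phi> h (\<Phi> t x)" .
          then show "norm (\<Phi> t (\<Phi> h x) - \<Phi> t x) < r" using h0(2) th inK[OF t0] by (simp add: dist_norm)
          show "deep C \<kappa> ((1 / norm (\<Phi> t (\<Phi> h x) - \<Phi> t x)) *\<^sub>R (\<Phi> t (\<Phi> h x) - \<Phi> t x))"
            using deepall by blast
        qed
      qed
      then have "\<Phi> t (\<Phi> h x) = \<Phi> t x" using th by blast
      moreover have "\<Phi> (t + h) x = \<Phi> t (\<Phi> h x)" using sg[rule_format, of t h x] th unfolding t1_def by simp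
      ultimately show ?thesis by simp
    qed
    have ind: "\<forall>t. t1 \<le> t \<and> t \<le> t1 + real n * h0 \<longrightarrow> \<Phi> t x = \<Phi> t1 x" for n
    proof (induction n)
      case 0 show ?case
      proof (intro allI impI)
        fix t assume "t1 \<le> t \<and> t \<le> t1 + real 0 * h0"
        then have "t = t1" by simp
        then show "\<Phi> t x = \<Phi> t1 x" by simp
      qed
    next
      case (Suc n)
      show ?case
      proof (intro allI impI)
        fix t assume t: "t1 \<le> t \<and> t \<le> t1 + real (Suc n) * h0"
        show "\<Phi> t x = \<Phi> t1 x"
        proof (cases "t - h0 \<ge> t1")
          case True
          have "\<Phi> t x = \<Phi> ((t - h0) + h0) x" by simp
          also have "\<dots> = \<Phi> (t - h0) x" using step[OF True less_imp_le[OF h0(1)] order_refl] by simp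
          also have "\<dots> = \<Phi> t1 x"
          proof -
            have "real (Suc n) * h0 = real n * h0 + h0" by (simp add: algebra_simps)
            then have "t - h0 \<le> t1 + real n * h0" using t by linarith
            then show ?thesis using Suc.IH True by blast
          qed
          finally show ?thesis .
        next
          case False
          have "\<Phi> t x = \<Phi> (t1 + (t - t1)) x" by simp
          also have "\<dots> = \<Phi> t1 x"
          proof -
            have "0 \<le> t - t1" "t - t1 \<le> h0" using False t by linarith+
            then show ?thesis using step[of t1 "t - t1"] by simp
          qed
          finally show ?thesis .
        qed
      qed
    qed
    have const: "\<Phi> t x = \<Phi> t1 x" if "t \<ge> t1" for t
    proof -
      obtain n :: nat where "(t - t1) / h0 \<le> real n" using real_arch_simple by blast
      then have "t - t1 \<le> real n * h0" using h0(1) by (simp add: pos_divide_le_eq)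
      then have "t \<le> t1 + real n * h0" by linarith
      then show ?thesis using ind that by blast
    qed
    define e where "e = \<Phi> t1 x"
    have t10: "t1 \<ge> 0" unfolding t1_def by simp
    have eq: "\<forall>t\<ge>0. \<Phi> t e = e"
    proof (intro allI impI)
      fix t :: real assume "t \<ge> 0"
      then have "\<Phi> t e = \<Phi> (t + t1) x" unfolding e_def using sg[rule_format, of t t1 x] t10 by simp
      also have "\<dots> = e" unfolding e_def using const[of "t + t1"] \<open>t \<ge> 0\<close> by simp
      finally show "\<Phi> t e = e" .
    qed
    have eO: "e \<in> \<Omega>"
      unfolding \<Omega>_def omega_limit_def
    proof (rule InterI)
      fix S assume "S \<in> (\<lambda>s. closure (\<Union>t\<in>{s..}. {\<Phi> t x})) ` {0..}"
      then obtain s :: real where S: "S = closure (\<Union>t\<in>{s..}. {\<Phi> t x})" by auto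
      have em: "e = \<Phi> (max s t1) x" unfolding e_def using const[of "max s t1"] by simp
      have m: "max s t1 \<in> {s..}" by simp
      have "\<Phi> (max s t1) x \<in> (\<Union>t\<in>{s..}. {\<Phi> t x})" by (rule UN_I[OF m]) simp
      then have "e \<in> (\<Union>t\<in>{s..}. {\<Phi> t x})" unfolding em .
      then show "e \<in> S" unfolding S by (rule closure_subset[THEN subsetD])
    qed
    have xe: "x = e"
      by (rule no_hit[OF sf G rT(2) rT(1) eO eq deepall t10]) (simp add: e_def)
    show ?thesis
    proof
      assume "\<Phi> t y = \<Phi> t x"
      then have "\<Phi> t y = e" using eq t xe by simp
      then have "y = e" by (rule no_hit[OF sf G rT(2) rT(1) eO eq deepall t])
      then show False using xe y by simp
    qed
  qed
  define \<delta> where "\<delta> = min r (\<delta>f / 2)"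
  have \<delta>: "\<delta> > 0" "\<delta> \<le> r" "\<delta> \<le> \<delta>f / 2" unfolding \<delta>_def using rT F by auto
  have main: "ereal \<delta> \<le> Limsup at_top (\<lambda>t::real. ereal (norm (\<Phi> t y - \<Phi> t x)))"
    if y: "y \<noteq> x" "y - x \<in> C" for y
  proof (rule ccontr)
    assume "\<not> ?thesis"
    then have "Limsup at_top (\<lambda>t::real. ereal (norm (\<Phi> t y - \<Phi> t x))) < ereal \<delta>" by simp
    then have "eventually (\<lambda>t. ereal (norm (\<Phi> t y - \<Phi> t x)) < ereal \<delta>) at_top"
      by (rule Limsup_lessD)
    then obtain t3 where t3: "\<And>t. t \<ge> t3 \<Longrightarrow> norm (\<Phi> t y - \<Phi> t x) < \<delta>"
      unfolding eventually_at_top_linorder by auto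
    obtain t4 where t4: "\<forall>t\<ge>t4. \<exists>z\<in>\<Omega>. dist (\<Phi> t x) z < \<delta>" using appr \<delta>(1) by blast
    define t1 where "t1 = max (max t3 t4) 0 + Tf"
    have t10: "t1 \<ge> 0" unfolding t1_def using F by simp
    have "\<forall>t\<ge>t1. \<Phi> t y = \<Phi> t x"
    proof (rule chain[OF sg G _ t10])
      show "0 \<le> Tm" using rT by simp
      show "\<forall>t\<ge>t1. (\<exists>z\<in>\<Omega>. dist (\<Phi> t x) z < r) \<and> norm (\<Phi> t y - \<Phi> t x) < r \<and>
          (\<Phi> t y \<noteq> \<Phi> t x \<longrightarrow> deep C \<kappa> ((1 / norm (\<Phi> t y - \<Phi> t x)) *\<^sub>R (\<Phi> t y - \<Phi> t x)))"
      proof (intro allI impI conjI)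
        fix t assume t: "t1 \<le> t"
        define s where "s = t - Tf"
        have s: "s \<ge> t3" "s \<ge> t4" "s \<ge> 0" "t \<ge> t3" "t \<ge> t4" using t F(2) unfolding s_def t1_def by auto
        show "\<exists>z\<in>\<Omega>. dist (\<Phi> t x) z < r" using t4 s \<delta> by force
        show "norm (\<Phi> t y - \<Phi> t x) < r" using t3[OF s(4)] \<delta> by simp
        assume ne: "\<Phi> t y \<noteq> \<Phi> t x"
        obtain z where z: "z \<in> \<Omega>" "dist (\<Phi> s x) z < \<delta>" using t4 s by blast
        have b1: "\<Phi> s x \<in> ball z \<delta>f" using z \<delta> by (simp add: dist_commute)
        have "dist (\<Phi> s y) (\<Phi> s x) < \<delta>" using t3[OF s(1)] by (simp add: dist_norm)
        then have b2: "\<Phi> s y \<in> ball z \<delta>f" using z \<delta> dist_triangle[of z "\<Phi> s y" "\<Phi> s x"]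
          by (simp add: dist_commute)
        obtain L \<kappa>' where L: "linear L" "L (\<Phi> s y - \<Phi> s x) = \<Phi> Tf (\<Phi> s y) - \<Phi> Tf (\<Phi> s x)"
          "\<kappa>' > \<kappa>f" "\<forall>v\<in>L ` C. norm v = 1 \<longrightarrow> (\<forall>u. u \<notin> C \<longrightarrow> \<kappa>' \<le> norm (v - u))"
          using F(4) z(1) b1 b2 by blast
        have tt: "\<Phi> Tf (\<Phi> s y) = \<Phi> t y" "\<Phi> Tf (\<Phi> s x) = \<Phi> t x"
          using sg[rule_format, of Tf s y] sg[rule_format, of Tf s x] F(2) s(3) unfolding s_def by simp_all
        define w where "w = \<Phi> t y - \<Phi> t x"
        have wn: "norm w > 0" using ne unfolding w_def by simp
        have inC: "(1 / norm w) *\<^sub>R (\<Phi> s y - \<Phi> s x) \<in> C" using sc mon1[OF s(3) y(2)] by blast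
        have "(1 / norm w) *\<^sub>R w = L ((1 / norm w) *\<^sub>R (\<Phi> s y - \<Phi> s x))"
          using L(1,2) tt unfolding w_def by (simp add: linear_scale)
        then have vL: "(1 / norm w) *\<^sub>R w \<in> L ` C" using inC by blast
        have "norm ((1 / norm w) *\<^sub>R w) = 1" using wn by simp
        then have far: "\<forall>u. u \<notin> C \<longrightarrow> \<kappa>' \<le> norm ((1 / norm w) *\<^sub>R w - u)" using L(4) vL by blast
        show "deep C \<kappa> ((1 / norm (\<Phi> t y - \<Phi> t x)) *\<^sub>R (\<Phi> t y - \<Phi> t x))"
          unfolding deep_def w_def[symmetric]
        proof (intro allI impI)
          fix u' assume "norm ((1 / norm w) *\<^sub>R w - u') < \<kappa>"
          then show "u' \<in> C" using far \<kappa>(3) L(3) by force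
        qed
      qed
    qed
    then have "\<Phi> t1 y = \<Phi> t1 x" by simp
    then show False using nz[OF y t10] by simp
  qed
  show ?thesis using main \<delta>(1) by blast
qed

end
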